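(* Let $F$ be an infinite field and $n\ge2$. If $f,h\in\mathcal{B}_{(g_1,\dots,g_k)}$ satisfy $f\le_{\mathcal{B}_{(g_1,\dots,g_k)}}h$, then $h\in\langle\{f\}\cup I\rangle_{T_{\mathbb{Z}_n}}$.
   Context: $UT_n(F)^{(-)}$: $n\times n$ upper triangular matrices, bracket $[a,b]=ab-ba$, canonical $\mathbb{Z}_n$-grading (degree-$k$ component spanned by $e_{ij}$, $j-i=k$); $I$ is its $T_{\mathbb{Z}_n}$-ideal of graded identities in the free graded Lie algebra with variables $y_1,y_2,\dots$ of degree $0$ and countably many variables of each nonzero degree. Commutators are left normed. Fix distinct variables $z_1,\dots,z_k$ of degrees $g_1,\dots,g_k\in\{1,\dots,n-1\}$ with $\sum g_i\le n-1$. $\mathcal{B}_{(g_1,\dots,g_k)}$ is the set of commutators $[z_{\sigma(1)},a^{(1)}_1y_1,\dots,a^{(1)}_my_m,z_{\sigma(2)},a^{(2)}_1y_1,\dots,a^{(2)}_my_m,\dots,z_{\sigma(k)},a^{(k)}_1y_1,\dots,a^{(k)}_my_m]$ with $\sigma\in S_k$, $\sigma(1)=1$, $m\ge0$, $a^{(j)}_i\ge0$, where $a y$ means $y$ repeated $a$ times. For such $f$, $V_f=((a^{(1)}_1,\dots,a^{(k)}_1),\dots,(a^{(1)}_m,\dots,a^{(k)}_m))$, a finite sequence in $\mathbb{N}_0^k$. For finite sequences in $\mathbb{N}_0^k$, $(p_1,\dots,p_m)\le_k(q_1,\dots,q_r)$ iff there is a strictly increasing $\varphi:\{1,\dots,m\}\to\{1,\dots,r\}$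 with $p_i\le q_{\varphi(i)}$ componentwise. $f\le_{\mathcal{B}_{(g_1,\dots,g_k)}}h$ iff $f,h$ have the same permutation $\sigma$ and $V_f\le_kV_h$. *)

theory Defs
  imports "HOL-Combinatorics.Permutations"
begin

text \<open>Variables of the free graded Lie algebra: a variable is a pair (d, i);
its Z_n-degree is d mod n.  Hence there are countably many variables of every degree.\<close>

type_synonym gvar = "nat \<times> nat"

definition vdeg :: "nat \<Rightarrow> gvar \<Rightarrow> nat" where
  "vdeg n v = fst v mod n"

text \<open>Lie expressions (elements of the free Lie algebra are their values in the
free associative algebra, which contains the free Lie algebra as the Lie subalgebra
generated by the variables).\<close>

datatype 'f lexpr =
    LVar gvar
  | LAdd "'f lexpr" "'f lexpr"
  | LSmult 'f "'f lexpr"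
  | LBr "'f lexpr" "'f lexpr"

text \<open>Free associative algebra F<X>: coefficient functions on words.\<close>

type_synonym 'f npoly = "gvar list \<Rightarrow> 'f"

definition pmul :: "'f::field npoly \<Rightarrow> 'f npoly \<Rightarrow> 'f npoly" where
  "pmul p q = (\<lambda>w. \<Sum>i\<le>length w. p (take i w) * q (drop i w))"

definition pbr :: "'f::field npoly \<Rightarrow> 'f npoly \<Rightarrow> 'f npoly" where
  "pbr p q = (\<lambda>w. pmul p q w - pmul q p w)"

definition pvar :: "gvar \<Rightarrow> 'f::field npoly" where
  "pvar v = (\<lambda>w. if w = [v] then 1 else 0)"

fun leval :: "'f::field lexpr \<Rightarrow> 'f npoly" where
  "leval (LVar v) = pvar v"
| "leval (LAdd a b) = (\<lambda>w. leval a w + leval b w)"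
| "leval (LSmult c a) = (\<lambda>w. c * leval a w)"
| "leval (LBr a b) = pbr (leval a) (leval b)"

fun lsubst :: "(gvar \<Rightarrow> 'f lexpr) \<Rightarrow> 'f lexpr \<Rightarrow> 'f lexpr" where
  "lsubst s (LVar v) = s v"
| "lsubst s (LAdd a b) = LAdd (lsubst s a) (lsubst s b)"
| "lsubst s (LSmult c a) = LSmult c (lsubst s a)"
| "lsubst s (LBr a b) = LBr (lsubst s a) (lsubst s b)"

definition wdeg :: "nat \<Rightarrow> gvar list \<Rightarrow> nat" where
  "wdeg n w = (\<Sum>v\<leftarrow>w. fst v) mod n"

definition homogeneous :: "nat \<Rightarrow> nat \<Rightarrow> 'f::field npoly \<Rightarrow> bool" where
  "homogeneous n d p \<longleftrightarrow> (\<forall>w. p w \<noteq> 0 \<longrightarrow> wdeg n w = d)"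

definition graded_subst :: "nat \<Rightarrow> (gvar \<Rightarrow> 'f::field lexpr) \<Rightarrow> bool" where
  "graded_subst n s \<longleftrightarrow> (\<forall>v. homogeneous n (vdeg n v) (leval (s v)))"

text \<open>The T_{Z_n}-ideal generated by a set S of Lie expressions (as a subset of the
free Lie algebra, i.e. of values in F<X>).\<close>

inductive_set tideal :: "nat \<Rightarrow> 'f::field lexpr set \<Rightarrow> 'f npoly set"
  for n :: nat and S :: "'f lexpr set" where
  gen: "e \<in> S \<Longrightarrow> leval e \<in> tideal n S"
| zero: "(\<lambda>w. 0) \<in> tideal n S"
| add: "p \<in> tideal n S \<Longrightarrow> q \<in> tideal n S \<Longrightarrow> (\<lambda>w. p w + q w) \<in> tideal n S"
| smult: "p \<in> tideal n S \<Longrightarrow> (\<lambda>w. c * p w) \<in> tideal n S"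
| br: "p \<in> tideal n S \<Longrightarrow> pbr p (leval e) \<in> tideal n S"
| endo: "leval e \<in> tideal n S \<Longrightarrow> graded_subst n s \<Longrightarrow> leval (lsubst s e) \<in> tideal n S"

text \<open>UT_n(F)^(-) with its canonical Z_n-grading; matrices as functions on indices < n
(0-based).\<close>

type_synonym 'f mat = "nat \<Rightarrow> nat \<Rightarrow> 'f"

definition mmul :: "nat \<Rightarrow> 'f::field mat \<Rightarrow> 'f mat \<Rightarrow> 'f mat" where
  "mmul n A B = (\<lambda>i j. \<Sum>l<n. A i l * B l j)"

fun meval :: "nat \<Rightarrow> (gvar \<Rightarrow> 'f::field mat) \<Rightarrow> 'f lexpr \<Rightarrow> 'f mat" where
  "meval n \<psi> (LVar v) = \<psi> v"
| "meval n \<psi> (LAdd a b) = (\<lambda>i j. meval n \<psi> a i j + meval n \<psi> b i j)"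
| "meval n \<psi> (LSmult c a) = (\<lambda>i j. c * meval n \<psi> a i j)"
| "meval n \<psi> (LBr a b) =
     (\<lambda>i j. mmul n (meval n \<psi> a) (meval n \<psi> b) i j - mmul n (meval n \<psi> b) (meval n \<psi> a) i j)"

definition in_component :: "nat \<Rightarrow> nat \<Rightarrow> 'f::field mat \<Rightarrow> bool" where
  "in_component n d A \<longleftrightarrow> (\<forall>i j. A i j \<noteq> 0 \<longrightarrow> i < n \<and> j < n \<and> i \<le> j \<and> j - i = d)"

definition graded_eval :: "nat \<Rightarrow> (gvar \<Rightarrow> 'f::field mat) \<Rightarrow> bool" where
  "graded_eval n \<psi> \<longleftrightarrow> (\<forall>v. in_component n (vdeg n v) (\<psi> v))"

definition graded_identities :: "nat \<Rightarrow> 'f::field lexpr set" where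
  "graded_identities n =
     {e. \<forall>\<psi>. graded_eval n \<psi> \<longrightarrow> (\<forall>i<n. \<forall>j<n. meval n \<psi> e i j = 0)}"

fun lnormed :: "gvar list \<Rightarrow> 'f lexpr" where
  "lnormed [] = LVar (0, 0)"  \<comment> \<open>never used\<close>
| "lnormed (x # xs) = foldl (\<lambda>acc v. LBr acc (LVar v)) (LVar x) xs"

text \<open>The commutator of B_{(g_1..g_k)} determined by the permutation sigma (0-based,
sigma 0 = 0), the variables z 0, ..., z (k-1) and V = (v_1,...,v_m), v_i in N^k given as
lists of length k: the j-th block is z_sigma(j) followed by y_1^{v_1 ! j} ... y_m^{v_m ! j},
where y_i = (0, i).\<close>

definition yvar :: "nat \<Rightarrow> gvar" where
  "yvar i = (0, i)"

definition bword :: "nat \<Rightarrow> (nat \<Rightarrow> nat) \<Rightarrow> (nat \<Rightarrow> gvar) \<Rightarrow> nat list list \<Rightarrow> gvar list" where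
  "bword k \<sigma> z V =
     concat (map (\<lambda>j. z (\<sigma> j) #
        concat (map (\<lambda>i. replicate (V ! i ! j) (yvar (Suc i))) [0..<length V])) [0..<k])"

definition bcomm :: "nat \<Rightarrow> (nat \<Rightarrow> nat) \<Rightarrow> (nat \<Rightarrow> gvar) \<Rightarrow> nat list list \<Rightarrow> 'f lexpr" where
  "bcomm k \<sigma> z V = lnormed (bword k \<sigma> z V)"

definition seq_le :: "nat list list \<Rightarrow> nat list list \<Rightarrow> bool" where
  "seq_le P Q \<longleftrightarrow> (\<exists>\<phi>. strict_mono_on {..<length P} \<phi> \<and>
      (\<forall>i<length P. \<phi> i < length Q \<and> list_all2 (\<le>) (P ! i) (Q ! \<phi> i)))"

end

theory Submission
  imports Defs
begin

definition mbr :: "nat \<Rightarrow> 'f::field mat \<Rightarrow> 'f mat \<Rightarrow> 'f mat" where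
  "mbr n A B = (\<lambda>i j. mmul n A B i j - mmul n B A i j)"

declare meval.simps(4)[simp del]

lemma meval_LBr[simp]: "meval n \<psi> (LBr a b) = mbr n (meval n \<psi> a) (meval n \<psi> b)"
  by (simp add: mbr_def meval.simps(4))

definition mf :: "nat \<Rightarrow> (gvar \<Rightarrow> 'f::field mat) \<Rightarrow> 'f mat \<Rightarrow> gvar list \<Rightarrow> 'f mat" where
  "mf n \<psi> A xs = foldl (\<lambda>M v. mbr n M (\<psi> v)) A xs"

lemma mf_Nil[simp]: "mf n \<psi> A [] = A" by (simp add: mf_def)
lemma mf_Cons[simp]: "mf n \<psi> A (x # xs) = mf n \<psi> (mbr n A (\<psi> x)) xs" by (simp add: mf_def)
lemma mf_append[simp]: "mf n \<psi> A (xs @ ys) = mf n \<psi> (mf n \<psi> A xs) ys" by (simp add: mf_def)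

lemma meval_fold: "meval n \<psi> (foldl (\<lambda>acc v. LBr acc (LVar v)) e xs) = mf n \<psi> (meval n \<psi> e) xs"
  by (induction xs arbitrary: e) simp_all

lemma meval_lnormed_Cons: "meval n \<psi> (lnormed (x # xs)) = mf n \<psi> (\<psi> x) xs"
  by (simp add: meval_fold)

lemma meval_lnormed_app: "u \<noteq> [] \<Longrightarrow> meval n \<psi> (lnormed (u @ w)) = mf n \<psi> (meval n \<psi> (lnormed u)) w"
  by (cases u) (simp_all add: meval_fold)

lemma mf_cong: "(\<forall>v\<in>set w. \<psi>' v = \<psi> v) \<Longrightarrow> mf n \<psi>' A w = mf n \<psi> A w"
  by (induction w arbitrary: A) simp_all

lemma meval_lnormed_cong: "u \<noteq> [] \<Longrightarrow> (\<forall>v\<in>set u. \<psi>' v = \<psi> v) \<Longrightarrow> meval n \<psi>' (lnormed u) = meval n \<psi> (lnormed u)"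
  by (cases u) (simp_all add: meval_fold mf_cong)

lemma mmul_diff_left: "mmul n (\<lambda>i j. A i j - B i j) C = (\<lambda>i j. mmul n A C i j - mmul n B C i j)"
  by (simp add: mmul_def left_diff_distrib sum_subtractf)
lemma mmul_diff_right: "mmul n C (\<lambda>i j. A i j - B i j) = (\<lambda>i j. mmul n C A i j - mmul n C B i j)"
  by (simp add: mmul_def right_diff_distrib sum_subtractf)
lemma mmul_assoc: "mmul n (mmul n A B) C = mmul n A (mmul n B C)"
  unfolding mmul_def
  by (auto simp: sum_distrib_left sum_distrib_right mult.assoc intro!: ext sum.swap)

lemma mbr_diff_left: "mbr n (\<lambda>i j. A i j - B i j) C = (\<lambda>i j. mbr n A C i j - mbr n B C i j)"
  by (simp add: mbr_def mmul_diff_left mmul_diff_right algebra_simps)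

lemma mf_diff: "mf n \<psi> (\<lambda>i j. A i j - B i j) xs = (\<lambda>i j. mf n \<psi> A xs i j - mf n \<psi> B xs i j)"
  by (induction xs arbitrary: A B) (simp_all add: mbr_diff_left)

lemma jacobi: "mbr n P (mbr n Z Y) = (\<lambda>i j. mbr n (mbr n P Z) Y i j - mbr n (mbr n P Y) Z i j)"
  unfolding mbr_def mmul_diff_left mmul_diff_right mmul_assoc
  by (auto simp: algebra_simps intro!: ext)

lemma mmul_diag_right: assumes "in_component n 0 Y" shows "mmul n A Y = (\<lambda>i j. A i j * Y j j)"
proof (intro ext)
  fix i j
  have Y: "Y l j = (if l = j then Y j j else 0)" for l
    using assms unfolding in_component_def by (metis diff_is_0_eq le_antisym)
  have Yj: "j \<ge> n \<Longrightarrow> Y j j = 0" using assms unfolding in_component_def by force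
  have "mmul n A Y i j = (\<Sum>l<n. if l = j then A i j * Y j j else 0)"
    unfolding mmul_def
  proof (rule sum.cong)
    fix l assume "l \<in> {..<n}"
    show "A i l * Y l j = (if l = j then A i j * Y j j else 0)"
      using Y[of l] by (cases "l = j") auto
  qed simp
  then show "mmul n A Y i j = A i j * Y j j" by (auto simp: Yj)
qed

lemma mmul_diag_left: assumes "in_component n 0 Y" shows "mmul n Y A = (\<lambda>i j. Y i i * A i j)"
proof (intro ext)
  fix i j
  have Y: "Y i l = (if l = i then Y i i else 0)" for l
    using assms unfolding in_component_def by (metis diff_is_0_eq le_antisym)
  have Yj: "i \<ge> n \<Longrightarrow> Y i i = 0" using assms unfolding in_component_def by force
  have "mmul n Y A i j = (\<Sum>l<n. if l = i then Y i i * A i j else 0)"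
    unfolding mmul_def
  proof (rule sum.cong)
    fix l assume "l \<in> {..<n}"
    show "Y i l * A l j = (if l = i then Y i i * A i j else 0)"
      using Y[of l] by (cases "l = i") auto
  qed simp
  then show "mmul n Y A i j = Y i i * A i j" by (auto simp: Yj)
qed

lemma mbr_diag: "in_component n 0 Y \<Longrightarrow> mbr n A Y = (\<lambda>i j. A i j * (Y j j - Y i i))"
  by (simp add: mbr_def mmul_diag_left mmul_diag_right algebra_simps)

lemma mf_diag: "\<forall>y\<in>set ys. in_component n 0 (\<psi> y) \<Longrightarrow>
   mf n \<psi> A ys = (\<lambda>i j. A i j * (\<Prod>y\<leftarrow>ys. \<psi> y j j - \<psi> y i i))"
  by (induction ys arbitrary: A) (simp_all add: mbr_diag mult.assoc)

lemma mf_perm: fixes \<psi> :: "gvar \<Rightarrow> 'f::field mat" assumes "\<forall>y\<in>set ys. in_component n 0 (\<psi> y)" "mset ys = mset ys'"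
  shows "mf n \<psi> A ys = mf n \<psi> A ys'"
proof -
  have s: "set ys' = set ys" using assms(2) by (metis mset_eq_setD)
  have "(\<Prod>y\<leftarrow>ys. f y) = (\<Prod>y\<leftarrow>ys'. f y)" for f :: "gvar \<Rightarrow> 'f"
    using assms(2) by (metis mset_map prod_mset_prod_list)
  then show ?thesis using assms s by (simp add: mf_diag)
qed

lemma tideal_comb:
  assumes "leval a \<in> tideal n S" "leval b \<in> tideal n S" "graded_identities n \<subseteq> S"
    and "\<forall>\<psi>. graded_eval n \<psi> \<longrightarrow> (\<forall>i<n. \<forall>j<n. meval n \<psi> c i j = meval n \<psi> a i j + meval n \<psi> b i j)"
  shows "leval c \<in> tideal n S"
proof -
  let ?D = "LAdd c (LSmult (-1) (LAdd a b))"
  have "?D \<in> graded_identities n" using assms(4) by (simp add: graded_identities_def)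
  then have "?D \<in> S" using assms(3) by blast
  then have D: "leval ?D \<in> tideal n S" by (rule tideal.gen)
  have "leval (LAdd a b) \<in> tideal n S" using tideal.add[OF assms(1,2)] by simp
  from tideal.add[OF this D]
  have "(\<lambda>w. leval (LAdd a b) w + leval ?D w) \<in> tideal n S" .
  moreover have "(\<lambda>w. leval (LAdd a b) w + leval ?D w) = leval c" by (rule ext) simp
  ultimately show ?thesis by simp
qed

lemma tideal_eq:
  assumes "leval a \<in> tideal n S" "graded_identities n \<subseteq> S"
    and "\<forall>\<psi>. graded_eval n \<psi> \<longrightarrow> (\<forall>i<n. \<forall>j<n. meval n \<psi> c i j = meval n \<psi> a i j)"
  shows "leval c \<in> tideal n S"
proof -
  have "leval (LSmult 0 a) \<in> tideal n S" using tideal.smult[OF assms(1), of 0] by simp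
  then show ?thesis using tideal_comb[OF assms(1) _ assms(2), of "LSmult 0 a" c] assms(3) by simp
qed

lemma pmul_pvar: assumes "pmul (pvar a) (pvar b) w \<noteq> (0::'f::field)" shows "w = [a, b]"
proof -
  from assms obtain i where "i \<le> length w" "pvar a (take i w) * (pvar b (drop i w) :: 'f) \<noteq> 0"
    unfolding pmul_def by (meson atMost_iff sum.not_neutral_contains_not_neutral)
  then have "take i w = [a]" "drop i w = [b]" unfolding pvar_def by (auto split: if_splits)
  then show ?thesis by (metis append_Cons append_Nil append_take_drop_id)
qed

lemma homog_pvar: "homogeneous n (vdeg n v) (pvar v :: 'f::field npoly)"
  by (simp add: homogeneous_def pvar_def wdeg_def vdeg_def)

lemma homog_pbr: assumes "fst b = 0"
  shows "homogeneous n (vdeg n a) (pbr (pvar a) (pvar b) :: 'f::field npoly)"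
  unfolding homogeneous_def
proof (intro allI impI)
  fix w assume "pbr (pvar a) (pvar b) w \<noteq> (0::'f)"
  then have "pmul (pvar a) (pvar b) w \<noteq> (0::'f) \<or> pmul (pvar b) (pvar a) w \<noteq> (0::'f)"
    unfolding pbr_def by auto
  then have "w = [a,b] \<or> w = [b,a]" using pmul_pvar by metis
  then show "wdeg n w = vdeg n a" using assms by (auto simp: wdeg_def vdeg_def)
qed

lemma graded_rename: "\<forall>v. fst (r v) = fst v \<Longrightarrow> graded_subst n (\<lambda>v. LVar (r v) :: 'f::field lexpr)"
  unfolding graded_subst_def using homog_pvar by (metis leval.simps(1) vdeg_def)

lemma graded_ins: assumes "fst y = 0" shows
  "graded_subst n (\<lambda>v. if v = x then LBr (LVar x) (LVar y) else LVar v :: 'f::field lexpr)"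
  unfolding graded_subst_def
proof (intro allI)
  fix v show "homogeneous n (vdeg n v) (leval (if v = x then LBr (LVar x) (LVar y) else LVar v :: 'f lexpr))"
    using assms by (cases "v = x") (simp_all add: homog_pvar homog_pbr)
qed

lemma meval_lsubst: "meval n \<psi> (lsubst s e) = meval n (\<lambda>v. meval n \<psi> (s v)) e"
  by (induction e) simp_all

lemma lsubst_fold: "lsubst (\<lambda>v. LVar (r v)) (foldl (\<lambda>acc v. LBr acc (LVar v)) e xs)
   = foldl (\<lambda>acc v. LBr acc (LVar v)) (lsubst (\<lambda>v. LVar (r v)) e) (map r xs)"
  by (induction xs arbitrary: e) simp_all

lemma lsubst_lnormed: "xs \<noteq> [] \<Longrightarrow> lsubst (\<lambda>v. LVar (r v)) (lnormed xs) = lnormed (map r xs)"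
  by (cases xs) (simp_all add: lsubst_fold)

lemma graded_diag: "graded_eval n \<psi> \<Longrightarrow> fst y = 0 \<Longrightarrow> in_component n 0 (\<psi> y)"
  by (metis graded_eval_def mod_0 vdeg_def)

definition bw :: "(gvar \<times> gvar list) list \<Rightarrow> gvar list" where
  "bw Bs = concat (map (\<lambda>b. fst b # snd b) Bs)"

lemma bw_simps[simp]: "bw [] = []" "bw (b # Bs) = fst b # snd b @ bw Bs" "bw (Bs @ Cs) = bw Bs @ bw Cs"
  by (simp_all add: bw_def)

lemma set_bw: "set (bw Bs) = fst ` set Bs \<union> (\<Union>b\<in>set Bs. set (snd b))"
  by (auto simp: bw_def)

definition ok :: "nat \<Rightarrow> (gvar \<times> gvar list) list \<Rightarrow> bool" where
  "ok n Bs \<longleftrightarrow> distinct (map fst Bs) \<and> (\<forall>b\<in>set Bs. fst (fst b) mod n \<noteq> 0 \<and> (\<forall>x\<in>set (snd b). fst x = 0))"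

definition Rp :: "gvar \<times> gvar list \<Rightarrow> gvar \<times> gvar list \<Rightarrow> bool" where
  "Rp b c \<longleftrightarrow> fst b = fst c \<and> mset (snd b) = mset (snd c)"

lemma mf_bw_perm: "list_all2 Rp Bs Cs \<Longrightarrow> (\<forall>b\<in>set Bs. \<forall>y\<in>set (snd b). in_component n 0 (\<psi> y)) \<Longrightarrow>
   mf n \<psi> A (bw Bs) = mf n \<psi> A (bw Cs)"
proof (induction arbitrary: A rule: list_all2_induct)
  case (Cons b Bs c Cs)
  have "\<forall>b\<in>set Bs. \<forall>y\<in>set (snd b). in_component n 0 (\<psi> y)" using Cons.prems by simp
  note ih = Cons.IH[OF this]
  show ?case using mf_perm[of "snd b" n \<psi> "snd c"] Cons.prems Cons.hyps(1) ih by (simp add: Rp_def)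
qed simp

lemma P_perm:
  assumes "leval (lnormed (bw Bs)) \<in> tideal n S" "graded_identities n \<subseteq> S"
    "list_all2 Rp Bs Cs" "\<forall>b\<in>set Bs. \<forall>y\<in>set (snd b). fst y = 0" "Bs \<noteq> []"
  shows "leval (lnormed (bw Cs)) \<in> tideal n S"
proof (rule tideal_eq[OF assms(1,2)], rule allI, rule impI)
  fix \<psi> assume g: "graded_eval n \<psi>"
  obtain b Bs' where B: "Bs = b # Bs'" using assms(5) by (cases Bs) auto
  then obtain c Cs' where C: "Cs = c # Cs'" "Rp b c" "list_all2 Rp Bs' Cs'"
    using assms(3) by (cases Cs) auto
  have d: "\<forall>b\<in>set Bs. \<forall>y\<in>set (snd b). in_component n 0 (\<psi> y)" using assms(4) g graded_diag by blast
  have "mf n \<psi> (\<psi> (fst b)) (snd b @ bw Bs') = mf n \<psi> (\<psi> (fst c)) (snd c @ bw Cs')"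
    using mf_perm[of "snd b" n \<psi> "snd c"] mf_bw_perm[OF C(3), of n \<psi>] d C(2) B by (simp add: Rp_def)
  then show "\<forall>i<n. \<forall>j<n. meval n \<psi> (lnormed (bw Cs)) i j = meval n \<psi> (lnormed (bw Bs)) i j"
    using B C by (simp add: meval_fold)
qed

lemma ok_notin: assumes "ok n (pre @ (x,ys) # post)"
  shows "x \<notin> set (bw pre)" "x \<notin> set ys" "x \<notin> set (bw post)"
proof -
  have x: "fst x \<noteq> 0" using assms by (auto simp: ok_def)
  have s: "\<forall>b\<in>set (pre @ (x,ys) # post). \<forall>v\<in>set (snd b). fst v = 0" using assms by (auto simp: ok_def)
  have d: "x \<notin> fst ` set pre" "x \<notin> fst ` set post" using assms by (auto simp: ok_def)
  show "x \<notin> set (bw pre)" "x \<notin> set ys" "x \<notin> set (bw post)"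
    using x s d unfolding set_bw by fastforce+
qed

lemma ok_replace: "ok n (pre @ b # post) \<Longrightarrow> fst c = fst b \<Longrightarrow> \<forall>v\<in>set (snd c). fst v = 0 \<Longrightarrow> ok n (pre @ c # post)"
  by (auto simp: ok_def)

declare lnormed.simps(2)[simp del]

lemma P_ins:
  assumes S: "graded_identities n \<subseteq> S" and y: "fst y = 0"
  shows "ok n (pre @ (x,ys) # post) \<Longrightarrow> leval (lnormed (bw (pre @ (x,ys) # post))) \<in> tideal n S
    \<Longrightarrow> leval (lnormed (bw (pre @ (x,y#ys) # post))) \<in> tideal n S"
proof (induction pre arbitrary: x ys post rule: rev_induct)
  case Nil
  let ?s = "\<lambda>v. if v = x then LBr (LVar x) (LVar y) else LVar v"
  have sub: "leval (lsubst ?s (lnormed (bw ((x,ys)#post)))) \<in> tideal n S"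
    using tideal.endo[OF _ graded_ins[OF y]] Nil.prems(2) by simp
  have xn: "x \<notin> set (ys @ bw post)" using ok_notin[of n "[]" x ys post] Nil.prems(1) by simp
  show ?case
  proof (rule tideal_eq[OF sub S], rule allI, rule impI)
    fix \<psi> assume g: "graded_eval n \<psi>"
    have "meval n \<psi> (lsubst ?s (lnormed (bw ((x,ys)#post))))
       = mf n (\<lambda>v. meval n \<psi> (?s v)) (mbr n (\<psi> x) (\<psi> y)) (ys @ bw post)"
      by (simp add: meval_lsubst meval_lnormed_Cons)
    also have "\<dots> = mf n \<psi> (mbr n (\<psi> x) (\<psi> y)) (ys @ bw post)"
      by (rule mf_cong) (use xn in auto)
    also have "\<dots> = meval n \<psi> (lnormed (bw ([] @ (x,y#ys)#post)))"
      by (simp add: meval_lnormed_Cons)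
    finally show "\<forall>i<n. \<forall>j<n. meval n \<psi> (lnormed (bw ([] @ (x,y#ys)#post))) i j =
       meval n \<psi> (lsubst ?s (lnormed (bw ((x,ys)#post)))) i j" by simp
  qed
next
  case (snoc p pre')
  let ?L = "pre' @ p # (x,ys) # post"
  have L: "(pre' @ [p]) @ (x,ys) # post = ?L" by simp
  have okL: "ok n (pre' @ (fst p, snd p) # ((x,ys) # post))" using snoc.prems(1) by simp
  have PL: "leval (lnormed (bw (pre' @ (fst p, snd p) # ((x,ys) # post)))) \<in> tideal n S"
    using snoc.prems(2) by simp
  have h1: "leval (lnormed (bw (pre' @ (fst p, y # snd p) # ((x,ys) # post)))) \<in> tideal n S"
    by (rule snoc.IH[OF okL PL])
  have ok1: "ok n (pre' @ (fst p, y # snd p) # ((x,ys) # post))"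
    by (rule ok_replace[OF okL]) (use okL y in \<open>auto simp: ok_def\<close>)
  have h2: "leval (lnormed (bw (pre' @ (fst p, snd p @ [y]) # ((x,ys) # post)))) \<in> tideal n S"
  proof (rule P_perm[OF h1 S])
    show "list_all2 Rp (pre' @ (fst p, y # snd p) # (x, ys) # post) (pre' @ (fst p, snd p @ [y]) # (x, ys) # post)"
      by (intro list_all2_appendI list_all2_refl list.rel_intros) (auto simp: Rp_def)
    show "\<forall>b\<in>set (pre' @ (fst p, y # snd p) # (x, ys) # post). \<forall>y\<in>set (snd b). fst y = 0"
      using ok1 by (auto simp: ok_def)
  qed simp
  let ?s = "\<lambda>v. if v = x then LBr (LVar x) (LVar y) else LVar v"
  have h3: "leval (lsubst ?s (lnormed (bw ((pre' @ [p]) @ (x,ys)#post)))) \<in> tideal n S"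
    using tideal.endo[OF snoc.prems(2) graded_ins[OF y]] .
  define u where "u = bw pre' @ fst p # snd p"
  define v where "v = ys @ bw post"
  have u0: "u \<noteq> []" by (simp add: u_def)
  have xu: "x \<notin> set u" "x \<notin> set v"
    using ok_notin[OF snoc.prems(1)] by (auto simp: u_def v_def)
  have w1: "bw ((pre' @ [p]) @ (x,y#ys)#post) = u @ (x # y # v)" by (simp add: u_def v_def)
  have w2: "bw (pre' @ (fst p, snd p @ [y]) # ((x,ys) # post)) = (u @ [y]) @ (x # v)" by (simp add: u_def v_def)
  have w3: "bw ((pre' @ [p]) @ (x,ys)#post) = u @ (x # v)" by (simp add: u_def v_def)
  show ?case
  proof (rule tideal_comb[OF h3 h2 S], rule allI, rule impI)
    fix \<psi> assume g: "graded_eval n \<psi>"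
    define E where "E = meval n \<psi> (lnormed u)"
    have e1: "meval n \<psi> (lnormed (u @ (x # y # v))) = mf n \<psi> (mbr n (mbr n E (\<psi> x)) (\<psi> y)) v"
      by (simp add: meval_lnormed_app[OF u0] E_def)
    have e2: "meval n \<psi> (lnormed ((u @ [y]) @ (x # v))) = mf n \<psi> (mbr n (mbr n E (\<psi> y)) (\<psi> x)) v"
      using u0 by (simp add: meval_lnormed_app E_def del: append_assoc)
    have "meval n (\<lambda>v. meval n \<psi> (?s v)) (lnormed u) = E"
      unfolding E_def by (rule meval_lnormed_cong[OF u0]) (use xu in auto)
    then have e3: "meval n \<psi> (lsubst ?s (lnormed (u @ (x # v)))) = mf n \<psi> (mbr n E (mbr n (\<psi> x) (\<psi> y))) v"
      using xu by (simp add: meval_lsubst meval_lnormed_app[OF u0] mf_cong)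
    show "\<forall>i<n. \<forall>j<n. meval n \<psi> (lnormed (bw ((pre' @ [p]) @ (x,y#ys)#post))) i j =
       meval n \<psi> (lsubst ?s (lnormed (bw ((pre' @ [p]) @ (x,ys)#post)))) i j +
       meval n \<psi> (lnormed (bw (pre' @ (fst p, snd p @ [y]) # ((x,ys) # post)))) i j"
      unfolding w1 w2 w3 e1 e2 e3 jacobi mf_diff by simp
  qed
qed

lemma ms1: assumes "A \<subseteq># B" "size B \<le> size A" shows "A = (B::'a multiset)"
proof -
  have "B = A + (B - A)" using assms(1) by (simp add: subset_mset.add_diff_inverse)
  then have "size B = size A + size (B - A)" by (metis size_union)
  then have "B - A = {#}" using assms(2) by simp
  then show ?thesis using \<open>B = A + (B - A)\<close> by simp
qed
lemma ms2: assumes "A \<subseteq># B" "size A < size B" shows "\<exists>a. add_mset a A \<subseteq># (B::'a multiset)"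
proof -
  have eq: "B = A + (B - A)" using assms(1) by (simp add: subset_mset.add_diff_inverse)
  then have "size B = size A + size (B - A)" by (metis size_union)
  then have "B - A \<noteq> {#}" using assms(2) by auto
  then obtain a where a: "a \<in># B - A" by (meson multiset_nonemptyE)
  then have "{#a#} \<subseteq># B - A" by simp
  then have "A + {#a#} \<subseteq># A + (B - A)" by (rule subset_mset.add_left_mono)
  then show ?thesis using eq by (metis add_mset_add_single)
qed

lemma P_grow:
  assumes S: "graded_identities n \<subseteq> S"
  shows "ok n (pre @ (x,ys) # post) \<Longrightarrow> leval (lnormed (bw (pre @ (x,ys) # post))) \<in> tideal n S
    \<Longrightarrow> mset ys \<subseteq># mset ys' \<Longrightarrow> \<forall>v\<in>set ys'. fst v = 0
    \<Longrightarrow> leval (lnormed (bw (pre @ (x,ys') # post))) \<in> tideal n S"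
proof (induction "length ys' - length ys" arbitrary: ys)
  case 0
  then have m: "mset ys = mset ys'" using ms1[of "mset ys" "mset ys'"] by simp
  show ?case
  proof (rule P_perm[OF "0.prems"(2) S])
    show "list_all2 Rp (pre @ (x, ys) # post) (pre @ (x, ys') # post)"
      using m by (intro list_all2_appendI list_all2_refl list.rel_intros) (auto simp: Rp_def)
    show "\<forall>b\<in>set (pre @ (x, ys) # post). \<forall>y\<in>set (snd b). fst y = 0"
      using "0.prems"(1) by (auto simp: ok_def)
  qed simp
next
  case (Suc d)
  have "size (mset ys) < size (mset ys')" using Suc.hyps(2) by simp
  then obtain a where a: "add_mset a (mset ys) \<subseteq># mset ys'" using ms2 Suc.prems(3) by blast
  then have a0: "fst a = 0" using Suc.prems(4) by (metis insert_subset_eq_iff set_mset_mset)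
  have ok1: "ok n (pre @ (x, a # ys) # post)"
    by (rule ok_replace[OF Suc.prems(1)]) (use Suc.prems(1) a0 in \<open>auto simp: ok_def\<close>)
  have P1: "leval (lnormed (bw (pre @ (x, a # ys) # post))) \<in> tideal n S"
    by (rule P_ins[OF S a0 Suc.prems(1,2)])
  show ?case
    by (rule Suc.hyps(1)[of "a # ys"]) (use Suc.hyps(2) ok1 P1 a Suc.prems(4) in auto)
qed

definition Rg :: "gvar \<times> gvar list \<Rightarrow> gvar \<times> gvar list \<Rightarrow> bool" where
  "Rg b c \<longleftrightarrow> fst b = fst c \<and> mset (snd b) \<subseteq># mset (snd c) \<and> (\<forall>v\<in>set (snd c). fst v = 0)"

lemma P_all:
  assumes S: "graded_identities n \<subseteq> S"
  shows "list_all2 Rg Bs Cs \<Longrightarrow> ok n (pre @ Bs) \<Longrightarrow> leval (lnormed (bw (pre @ Bs))) \<in> tideal n S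
    \<Longrightarrow> leval (lnormed (bw (pre @ Cs))) \<in> tideal n S"
proof (induction arbitrary: pre rule: list_all2_induct)
  case Nil
  then show ?case by simp
next
  case (Cons b Bs c Cs)
  obtain x ys where b: "b = (x, ys)" by (cases b)
  have c: "c = (x, snd c)" using Cons.hyps(1) b by (cases c) (simp add: Rg_def)
  have ok0: "ok n (pre @ (x,ys) # Bs)" using Cons.prems(1) b by simp
  have P1: "leval (lnormed (bw (pre @ (x, snd c) # Bs))) \<in> tideal n S"
    by (rule P_grow[OF S ok0]) (use Cons.prems(2) b Cons.hyps(1) c in \<open>auto simp: Rg_def\<close>)
  have ok1: "ok n (pre @ (x, snd c) # Bs)"
    by (rule ok_replace[OF ok0]) (use Cons.hyps(1) in \<open>auto simp: Rg_def\<close>)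
  have "leval (lnormed (bw ((pre @ [c]) @ Cs))) \<in> tideal n S"
    by (rule Cons.IH) (use ok1 P1 c in \<open>simp_all\<close>)
  then show ?case by simp
qed

lemma msc: "mset (concat (map (\<lambda>i. replicate (c i) (x i)) [0..<m])) = (\<Sum>i<m. replicate_mset (c i) (x i))"
  by (induction m) (simp_all add: mset_replicate)

lemma map_bw: "map r (bw Bs) = bw (map (\<lambda>b. (r (fst b), map r (snd b))) Bs)"
  by (induction Bs) simp_all

lemma count_msc: "count (\<Sum>i<m. replicate_mset (c i) (x i)) a = (\<Sum>i<m. if a = x i then c i else 0)"
  by (simp add: count_sum)

theorem mainTheorem13:
  fixes n k :: nat and g :: "nat \<Rightarrow> nat" and z :: "nat \<Rightarrow> gvar"
    and \<sigma> :: "nat \<Rightarrow> nat" and V W :: "nat list list"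
  assumes "infinite (UNIV :: 'f::field set)"
    and "n \<ge> 2"
    and "k \<ge> 1"
    and "\<forall>j<k. 1 \<le> g j \<and> g j \<le> n - 1"
    and "(\<Sum>j<k. g j) \<le> n - 1"
    and "inj_on z {..<k}"
    and "\<forall>j<k. vdeg n (z j) = g j"
    and "\<sigma> permutes {..<k}" and "\<sigma> 0 = 0"
    and "\<forall>v\<in>set V. length v = k" and "\<forall>v\<in>set W. length v = k"
    and "seq_le V W"
  shows "leval (bcomm k \<sigma> z W :: 'f lexpr)
           \<in> tideal n ({bcomm k \<sigma> z V} \<union> graded_identities n)"
proof -
  let ?S = "{bcomm k \<sigma> z V :: 'f lexpr} \<union> graded_identities n"
  have S: "graded_identities n \<subseteq> ?S" by blast
  define ysv where "ysv X j = concat (map (\<lambda>i. replicate (X ! i ! j) (yvar (Suc i))) [0..<length X])" for X j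
  define B where "B X = map (\<lambda>j. (z (\<sigma> j), ysv X j)) [0..<k]" for X
  have bwB: "bword k \<sigma> z X = bw (B X)" for X
    unfolding bword_def bw_def B_def ysv_def by (simp add: o_def)
  obtain \<phi> where phi: "strict_mono_on {..<length V} \<phi>"
    "\<forall>i<length V. \<phi> i < length W \<and> list_all2 (\<le>) (V ! i) (W ! \<phi> i)"
    using assms(12) unfolding seq_le_def by blast
  define m where "m = length V"
  define m' where "m' = length W"
  have inj: "inj_on \<phi> {..<m}" using phi(1) strict_mono_on_imp_inj_on m_def by blast
  define r :: "gvar \<Rightarrow> gvar" where "r v = (if fst v = 0 \<and> 0 < snd v \<and> snd v \<le> m then (0, Suc (\<phi> (snd v - 1))) else v)" for v
  have rfst: "\<forall>v. fst (r v) = fst v" by (simp add: r_def)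
  have zfst: "fst (z (\<sigma> j)) mod n = g (\<sigma> j)" "fst (z (\<sigma> j)) \<noteq> 0" if "j < k" for j
  proof -
    have "\<sigma> j < k" using permutes_in_image[OF assms(8)] that by simp
    then show "fst (z (\<sigma> j)) mod n = g (\<sigma> j)" using assms(7) by (simp add: vdeg_def)
    moreover have "1 \<le> g (\<sigma> j)" using assms(4) \<open>\<sigma> j < k\<close> by blast
    ultimately show "fst (z (\<sigma> j)) \<noteq> 0" by (metis mod_0 not_one_le_zero)
  qed
  have rz: "r (z (\<sigma> j)) = z (\<sigma> j)" if "j < k" for j using zfst[OF that] by (simp add: r_def)
  have PV: "leval (lnormed (bw (B V)) :: 'f lexpr) \<in> tideal n ?S"
    by (rule tideal.gen) (simp add: bcomm_def bwB)
  have ne: "bw (B V) \<noteq> []" using assms(3) by (cases k) (auto simp: B_def)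
  have "leval (lsubst (\<lambda>v. LVar (r v)) (lnormed (bw (B V)) :: 'f lexpr)) \<in> tideal n ?S"
    by (rule tideal.endo[OF PV graded_rename[OF rfst]])
  then have Pr: "leval (lnormed (bw (map (\<lambda>b. (r (fst b), map r (snd b))) (B V))) :: 'f lexpr) \<in> tideal n ?S"
    by (simp add: lsubst_lnormed[OF ne] map_bw)
  define Br where "Br = map (\<lambda>b. (r (fst b), map r (snd b))) (B V)"
  have Br: "Br = map (\<lambda>j. (z (\<sigma> j), map r (ysv V j))) [0..<k]"
    unfolding Br_def B_def by (simp add: rz)
  have ysvfst: "\<forall>v\<in>set (ysv X j). fst v = 0" for X j by (auto simp: ysv_def yvar_def)
  have okBr: "ok n Br"
  proof -
    have "inj_on (\<lambda>j. z (\<sigma> j)) {..<k}"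
      using comp_inj_on[OF permutes_inj_on[OF assms(8)], of z "{..<k}"] assms(6) permutes_image[OF assms(8)]
      by (simp add: o_def)
    then have "distinct (map (\<lambda>j. z (\<sigma> j)) [0..<k])" by (simp add: distinct_map lessThan_atLeast0)
    moreover have gpos: "0 < g (\<sigma> j)" if "j < k" for j
      using assms(4) permutes_in_image[OF assms(8)] that by (metis lessThan_iff not_one_le_zero not_gr0)
    moreover have ys0: "v \<in> set (ysv V j) \<Longrightarrow> fst v = 0" for v j using ysvfst by blast
    ultimately show ?thesis unfolding Br ok_def using zfst rfst by (auto simp: o_def dest!: ys0)
  qed
  have mapr: "map r (ysv V j) = concat (map (\<lambda>i. replicate (V ! i ! j) (yvar (Suc (\<phi> i)))) [0..<m])" for j
    unfolding ysv_def map_concat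
    by (auto simp: r_def yvar_def o_def m_def intro!: arg_cong[where f=concat] map_cong)
  have sub: "mset (map r (ysv V j)) \<subseteq># mset (ysv W j)" if j: "j < k" for j
  proof -
    have le: "V ! i ! j \<le> W ! (\<phi> i) ! j" if "i < m" for i
    proof -
      have "list_all2 (\<le>) (V ! i) (W ! \<phi> i)" using phi(2) that m_def by blast
      moreover have "length (V ! i) = k" using assms(10) that m_def by simp
      ultimately show ?thesis using j by (simp add: list_all2_conv_all_nth)
    qed
    have img: "\<phi> ` {..<m} \<subseteq> {..<m'}" using phi(2) m_def m'_def by auto
    show ?thesis unfolding subseteq_mset_def
    proof
      fix a
      have "count (mset (map r (ysv V j))) a = (\<Sum>i<m. if a = yvar (Suc (\<phi> i)) then V ! i ! j else 0)"
        unfolding mapr msc count_msc ..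
      also have "\<dots> \<le> (\<Sum>i<m. if a = yvar (Suc (\<phi> i)) then W ! (\<phi> i) ! j else 0)"
        by (rule sum_mono) (simp add: le)
      also have "\<dots> = (\<Sum>t\<in>\<phi> ` {..<m}. if a = yvar (Suc t) then W ! t ! j else 0)"
        by (simp add: sum.reindex[OF inj])
      also have "\<dots> \<le> (\<Sum>t<m'. if a = yvar (Suc t) then W ! t ! j else 0)"
        by (rule sum_mono2[OF _ img]) auto
      also have "\<dots> = count (mset (ysv W j)) a"
        unfolding ysv_def m'_def msc count_msc ..
      finally show "count (mset (map r (ysv V j))) a \<le> count (mset (ysv W j)) a" .
    qed
  qed
  have rel: "list_all2 Rg Br (B W)"
    unfolding Br B_def list_all2_conv_all_nth using sub ysvfst by (simp add: Rg_def)
  have "leval (lnormed (bw ([] @ B W)) :: 'f lexpr) \<in> tideal n ?S"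
    by (rule P_all[OF S rel]) (use okBr Pr Br_def in simp_all)
  then show ?thesis by (simp add: bcomm_def bwB)
qed

end
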